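(* Consider the simplified community network described below with $\gamma>1$. Its equilibrium points (points $\beta=(\beta_a,\beta_b)\in[0,1]^2$ with $F(\beta)=\beta$) are $\mathbf 0=(0,0)$, $\mathbf 1=(1,1)$, and, when $\max\{p_1/p_2,\,p_2/p_1\}<\gamma$, the interior point $\beta^*=(\beta_a^*,\beta_b^* )$ with $$\beta_a^*=\frac{\gamma\big((\gamma+1)p_1p_2-2p_2+\sqrt{p_1p_2}\,\Delta\big)}{(\gamma-1)\big((\gamma+1)p_1p_2+\sqrt{p_1p_2}\,\Delta\big)},\qquad \beta_b^*=\frac{2\gamma p_1-(\gamma+1)p_1p_2-\sqrt{p_1p_2}\,\Delta}{(\gamma-1)\big((\gamma+1)p_1p_2+\sqrt{p_1p_2}\,\Delta\big)},$$ where $\Delta=\sqrt{4\gamma(1-p_1-p_2)+(\gamma+1)^2p_1p_2}$.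
   Context: The simplified community network has two agents $a,b$ with normalized adjacency (transition) matrix $W=\begin{pmatrix}p_1&1-p_1\\1-p_2&p_2\end{pmatrix}$, $p_1,p_2\in[0,1)$ not both zero; equivalently the symmetric weights are $a_{a,a}=p_1(1-p_2)$, $a_{a,b}=a_{b,a}=(1-p_1)(1-p_2)$, $a_{b,b}=p_2(1-p_1)$. Agent $a$ has bias parameter $\gamma_a=\gamma>1$ and agent $b$ has bias parameter $\gamma_b=1/\gamma$. With $f(\mu,\gamma)=\frac{\gamma\mu}{1+(\gamma-1)\mu}$, $\mu_a=p_1\beta_a+(1-p_1)\beta_b$, $\mu_b=(1-p_2)\beta_a+p_2\beta_b$, the map $F$ is $F(\beta_a,\beta_b)=(f(\mu_a,\gamma),f(\mu_b,1/\gamma))$. The condition $\max\{p_1/p_2,p_2/p_1\}<\gamma$ is understood to fail if $p_1=0$ or $p_2=0$. *)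

theory Defs
  imports Complex_Main
begin

definition fbias :: "real \<Rightarrow> real \<Rightarrow> real" where
  "fbias \<mu> \<gamma> = \<gamma> * \<mu> / (1 + (\<gamma> - 1) * \<mu>)"

definition Fnet :: "real \<Rightarrow> real \<Rightarrow> real \<Rightarrow> real \<times> real \<Rightarrow> real \<times> real" where
  "Fnet p1 p2 \<gamma> \<beta> =
     (let \<mu>a = p1 * fst \<beta> + (1 - p1) * snd \<beta>;
          \<mu>b = (1 - p2) * fst \<beta> + p2 * snd \<beta>
      in (fbias \<mu>a \<gamma>, fbias \<mu>b (1 / \<gamma>)))"

definition interior_cond :: "real \<Rightarrow> real \<Rightarrow> real \<Rightarrow> bool" where
  "interior_cond p1 p2 \<gamma> \<longleftrightarrow> p1 \<noteq> 0 \<and> p2 \<noteq> 0 \<and> max (p1 / p2) (p2 / p1) < \<gamma>"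

definition Delta :: "real \<Rightarrow> real \<Rightarrow> real \<Rightarrow> real" where
  "Delta p1 p2 \<gamma> = sqrt (4 * \<gamma> * (1 - p1 - p2) + (\<gamma> + 1)^2 * p1 * p2)"

definition beta_star :: "real \<Rightarrow> real \<Rightarrow> real \<Rightarrow> real \<times> real" where
  "beta_star p1 p2 \<gamma> =
     (let D = Delta p1 p2 \<gamma>; s = sqrt (p1 * p2);
          den = (\<gamma> - 1) * ((\<gamma> + 1) * p1 * p2 + s * D)
      in (\<gamma> * ((\<gamma> + 1) * p1 * p2 - 2 * p2 + s * D) / den,
          (2 * \<gamma> * p1 - (\<gamma> + 1) * p1 * p2 - s * D) / den))"

end

theory Submission
  imports Defs
begin


lemma fixed_iff:
  fixes p1 p2 g x y :: real
  assumes "0 \<le> p1" "p1 < 1" "0 \<le> p2" "p2 < 1" "g > 1"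
    "0 \<le> x" "x \<le> 1" "0 \<le> y" "y \<le> 1"
  shows "Fnet p1 p2 g (x,y) = (x,y) \<longleftrightarrow>
    (x*(1+(g-1)*(p1*x+(1-p1)*y)) = g*(p1*x+(1-p1)*y) \<and>
     y*(g-(g-1)*((1-p2)*x+p2*y)) = (1-p2)*x+p2*y)"
proof -
  define ma where "ma = p1*x+(1-p1)*y"
  define mb where "mb = (1-p2)*x+p2*y"
  have ma0: "0 \<le> ma" unfolding ma_def using assms by simp
  have ma1: "ma \<le> 1"
  proof -
    have "ma \<le> p1*1+(1-p1)*1" unfolding ma_def using assms
      by (intro add_mono mult_left_mono) auto
    thus ?thesis by simp
  qed
  have mb0: "0 \<le> mb" unfolding mb_def using assms by simp
  have mb1: "mb \<le> 1"
  proof -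
    have "mb \<le> (1-p2)*1+p2*1" unfolding mb_def using assms
      by (intro add_mono mult_left_mono) auto
    thus ?thesis by simp
  qed
  have d1: "1+(g-1)*ma > 0" using ma0 assms by (smt (verit) mult_nonneg_nonneg)
  have d2: "g-(g-1)*mb > 0" using mb1 assms
    by (smt (verit) mult_left_le mult_right_mono)
  have f1: "fbias ma g = g*ma/(1+(g-1)*ma)" by (simp add: fbias_def)
  have f2: "fbias mb (1/g) = mb/(g-(g-1)*mb)"
    unfolding fbias_def using assms d2 by (simp add: field_simps)
  have "Fnet p1 p2 g (x,y) = (fbias ma g, fbias mb (1/g))"
    by (simp add: Fnet_def ma_def mb_def Let_def)
  hence "Fnet p1 p2 g (x,y) = (x,y) \<longleftrightarrow> (g*ma/(1+(g-1)*ma) = x \<and> mb/(g-(g-1)*mb) = y)"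
    using f1 f2 by simp
  also have "\<dots> \<longleftrightarrow> (x*(1+(g-1)*ma) = g*ma \<and> y*(g-(g-1)*mb) = mb)"
    using d1 d2 by (auto simp: field_simps)
  finally show ?thesis by (simp add: ma_def mb_def)
qed



definition QQ :: "real\<Rightarrow>real\<Rightarrow>real\<Rightarrow>real\<Rightarrow>real" where
 "QQ p1 p2 g x = (g-1)^2*p1*(1-p1-p2)*x^2 - (g-1)*p1*(g*(2-2*p1-p2)+p2)*x + (1-p1)*g*(p1*g-p2)"

lemma QQ_alt: "QQ p1 p2 g x = (1-p1)*(1-p2)*(g-(g-1)*x) - (1-p1*g+(g-1)*p1*x)*((1-p1)*g-(g-1)*(1-p1-p2)*x)"
  unfolding QQ_def power2_eq_square by algebra

lemma E1_iff: fixes p1 p2 g x y :: real shows "x*(1+(g-1)*(p1*x+(1-p1)*y)) = g*(p1*x+(1-p1)*y) \<longleftrightarrow> (1-p1)*y*(g-(g-1)*x) = x*(1-p1*g+(g-1)*p1*x)"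
proof -
  have "x*(1+(g-1)*(p1*x+(1-p1)*y)) - g*(p1*x+(1-p1)*y) = -((1-p1)*y*(g-(g-1)*x) - x*(1-p1*g+(g-1)*p1*x))"
    by algebra
  thus ?thesis by linarith
qed

lemma E2_key:
  fixes p1 p2 g x y :: real
  assumes "(1-p1)*y*(g-(g-1)*x) = x*(1-p1*g+(g-1)*p1*x)" "p1 \<noteq> 1" "g-(g-1)*x \<noteq> 0"
  shows "(1-p1)^2*(g-(g-1)*x)^2*(y*(g-(g-1)*((1-p2)*x+p2*y)) - ((1-p2)*x+p2*y)) = -(g-1)*x*(1-x)*QQ p1 p2 g x"
proof -
  define D where "D = g-(g-1)*x"
  define P where "P = 1-p1*g+(g-1)*p1*x"
  define Y where "Y = (1-p1)*D*y"
  have Y: "Y = x*P" using assms(1) unfolding Y_def D_def P_def by (simp add: mult_ac)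
  have "(1-p1)^2*D^2*(y*(g-(g-1)*((1-p2)*x+p2*y)) - ((1-p2)*x+p2*y))
     = (g-1)*(1-p1)*D*Y - (g-1)*(1-p2)*x*(1-p1)*D*Y - (g-1)*p2*Y^2 - (1-p2)*x*(1-p1)^2*D^2 + (1-p2)*(1-p1)*D*Y"
    unfolding Y_def D_def power2_eq_square by algebra
  also have "\<dots> = -(g-1)*x*(1-x)*QQ p1 p2 g x"
    unfolding Y QQ_def P_def D_def power2_eq_square by algebra
  finally show ?thesis by (simp add: D_def)
qed



lemma QQ_diff: "QQ p1 p2 g u - QQ p1 p2 g v = (u-v)*((g-1)^2*p1*(1-p1-p2)*(u+v) - (g-1)*p1*(g*(2-2*p1-p2)+p2))"
  unfolding QQ_def power2_eq_square by algebra

lemma QQ_interp: "(b-a)*QQ p1 p2 g x - (b-x)*QQ p1 p2 g a - (x-a)*QQ p1 p2 g b = -((g-1)^2*p1*(1-p1-p2))*((x-a)*(b-x)*(b-a))"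
  unfolding QQ_def power2_eq_square by algebra

lemma QQ0: "QQ p1 p2 g 0 = (1-p1)*g*(p1*g-p2)" unfolding QQ_def by simp
lemma QQ1: "QQ p1 p2 g 1 = (1-p1)*(p1-p2*g)" unfolding QQ_def power2_eq_square by algebra

lemma QQ_dec:
  fixes p1 p2 g u v :: real
  assumes "0 \<le> v" "v < u" "u \<le> 1" "p1 > 0" "g > 1"
    "g*(2-2*p1-p2)+p2 > 0" "g*(2-2*p1-p2)+p2 > 2*(g-1)*(1-p1-p2)"
  shows "QQ p1 p2 g u < QQ p1 p2 g v"
proof -
  define r where "r = 1-p1-p2"
  define K where "K = g*(2-2*p1-p2)+p2"
  have "(g-1)*r*(u+v) < K"
  proof (cases "r \<ge> 0")
    case True
    have "(g-1)*r*(u+v) \<le> (g-1)*r*2"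
      using True assms by (intro mult_left_mono) auto
    thus ?thesis using assms(7) unfolding r_def K_def by linarith
  next
    case False
    have "(g-1)*r \<le> 0" using False assms by (intro mult_nonneg_nonpos) auto
    hence "(g-1)*r*(u+v) \<le> 0" using assms mult_nonpos_nonneg[of "(g-1)*r" "u+v"]
      by auto
    thus ?thesis using assms(6) unfolding K_def by linarith
  qed
  hence "(g-1)*p1*((g-1)*r*(u+v) - K) < 0" using assms
      mult_pos_neg[of "(g-1)*p1" "(g-1)*r*(u+v) - K"] by auto
  hence "(u-v)*((g-1)*p1*((g-1)*r*(u+v) - K)) < 0" using assms
    mult_pos_neg[of "u-v" "(g-1)*p1*((g-1)*r*(u+v) - K)"] by auto
  moreover have "QQ p1 p2 g u - QQ p1 p2 g v = (u-v)*((g-1)*p1*((g-1)*r*(u+v) - K))"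
    unfolding QQ_diff r_def K_def power2_eq_square by algebra
  ultimately show ?thesis by linarith
qed

lemma QQ_x0:
  fixes p1 p2 g x0 :: real
  assumes "1-p1*g+(g-1)*p1*x0 = 0"
  shows "QQ p1 p2 g x0 = (1-p1)*(1-p2)*(g-(g-1)*x0)"
  unfolding QQ_alt assms by simp



lemma root_cond:
  fixes p1 p2 g x :: real
  assumes "0 \<le> p1" "p1 < 1" "0 \<le> p2" "p2 < 1" "\<not> (p1 = 0 \<and> p2 = 0)" "g > 1"
    "0 < x" "x < 1" "QQ p1 p2 g x = 0" "1-p1*g+(g-1)*p1*x > 0"
  shows "p1 > 0 \<and> p2 > 0 \<and> p1*g > p2 \<and> p2*g > p1"
proof -
  have p1: "p1 > 0"
  proof (rule ccontr)
    assume "\<not> p1 > 0"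
    hence "p1 = 0" using assms by simp
    hence "QQ p1 p2 g x = -(g*p2)" "p2 > 0" using assms unfolding QQ_def by auto
    thus False using assms by simp
  qed
  have Q1: "QQ p1 p2 g 1 < 0"
  proof (rule ccontr)
    assume "\<not> QQ p1 p2 g 1 < 0"
    hence "(1-p1)*(p1-p2*g) \<ge> 0" unfolding QQ1 by simp
    hence h: "p1 \<ge> p2*g" using assms by (simp add: zero_le_mult_iff)
    show False
    proof (cases "1-p1-p2 \<ge> 0")
      case True
      have a: "2*(1-p1-p2) + p2*(g+1) > 0"
      proof (cases "p2 = 0")
        case True then show ?thesis using assms by simp
      next
        case False then have "p2*(g+1) > 0" using assms by simp
        then show ?thesis using \<open>1-p1-p2 \<ge> 0\<close> by (smt (verit))
      qed
      have b: "g*(2-2*p1-p2)+p2 - 2*(g-1)*(1-p1-p2) = 2*(1-p1-p2) + p2*(g+1)"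
        by algebra
      have c: "g*(2-2*p1-p2)+p2 = 2*g*(1-p1-p2) + p2*(g+1)" by algebra
      have "g*(1-p1-p2) \<ge> 1*(1-p1-p2)" using True assms
        by (intro mult_right_mono) auto
      hence "QQ p1 p2 g 1 < QQ p1 p2 g x"
        using a b c assms p1 by (intro QQ_dec) auto
      thus False using \<open>\<not> QQ p1 p2 g 1 < 0\<close> assms by simp
    next
      case False
      define x0 where "x0 = (p1*g-1)/((g-1)*p1)"
      have gp: "(g-1)*p1 > 0" using assms p1 by simp
      have P0: "1-p1*g+(g-1)*p1*x0 = 0" unfolding x0_def using gp p1 assms by simp
      have "(g-1)*p1*x0 < (g-1)*p1*x" using P0 assms by linarith
      hence x0x: "x0 < x" using gp by (metis mult_less_cancel_left_pos)
      have e1: "(g-1)*p1*1 = p1*g - p1" by algebra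
      have "(g-1)*p1*x0 < (g-1)*p1*1" using P0 assms e1 by linarith
      hence x01: "x0 < 1" using gp by (metis mult_less_cancel_left_pos)
      have "(g-1)*x0 < (g-1)*1" using x01 assms by (intro mult_strict_left_mono) auto
      hence "g-(g-1)*x0 > 0" by simp
      hence Qx0: "QQ p1 p2 g x0 > 0" unfolding QQ_x0[OF P0] using assms by simp
      have "-((g-1)^2*p1*(1-p1-p2)) > 0" using False assms p1 by (simp add: mult_pos_neg)
      moreover have "(x-x0)*(1-x)*(1-x0) > 0" using x0x x01 assms by simp
      ultimately have "-((g-1)^2*p1*(1-p1-p2))*((x-x0)*(1-x)*(1-x0)) > 0" by (rule mult_pos_pos)
      hence "(1-x0)*QQ p1 p2 g x - (1-x)*QQ p1 p2 g x0 - (x-x0)*QQ p1 p2 g 1 > 0"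
        unfolding QQ_interp by simp
      moreover have "(1-x)*QQ p1 p2 g x0 > 0" using Qx0 assms by simp
      moreover have "(x-x0)*QQ p1 p2 g 1 \<ge> 0" using x0x \<open>\<not> QQ p1 p2 g 1 < 0\<close> by simp
      ultimately show False using assms by simp
    qed
  qed
  have Q0: "QQ p1 p2 g 0 > 0"
  proof (rule ccontr)
    assume "\<not> QQ p1 p2 g 0 > 0"
    hence "((1-p1)*g)*(p1*g-p2) \<le> 0" unfolding QQ0 by simp
    moreover have "(1-p1)*g > 0" using assms by simp
    ultimately have h: "p1*g \<le> p2" using mult_pos_pos[of "(1-p1)*g" "p1*g-p2"] by linarith
    have "p1*g > 0" using p1 assms by simp
    hence p2: "p2 > 0" using h by linarith
    have "2*p1*g \<le> 2*p2" using h by simp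
    have "p2*(g+1) < g + 1" using assms by simp
    moreover have "g*(2-2*p1-p2)+p2 = 2*g - 2*(p1*g) + 2*p2 - p2*(g+1)" by algebra
    ultimately have K: "g*(2-2*p1-p2)+p2 > 0" using h assms by linarith
    have K2: "g*(2-2*p1-p2)+p2 > 2*(g-1)*(1-p1-p2)"
    proof (cases "1-p1-p2 \<ge> 0")
      case True
      have b: "g*(2-2*p1-p2)+p2 - 2*(g-1)*(1-p1-p2) = 2*(1-p1-p2) + p2*(g+1)"
        by algebra
      have "p2*(g+1) > 0" using p2 assms by simp
      then show ?thesis using b True by (smt (verit))
    next
      case False
      have "(g-1)*(1-p1-p2) \<le> 0" using False assms by (intro mult_nonneg_nonpos) auto
      then show ?thesis using K by linarith
    qed
    have "QQ p1 p2 g x < QQ p1 p2 g 0" using K K2 assms p1 by (intro QQ_dec) auto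
    thus False using \<open>\<not> QQ p1 p2 g 0 > 0\<close> assms by simp
  qed
  have "((1-p1)*g)*(p1*g-p2) > 0" using Q0 unfolding QQ0 by simp
  moreover have "(1-p1)*g > 0" using assms by simp
  ultimately have a: "p1*g > p2" by (simp add: zero_less_mult_iff)
  have "(1-p1)*(p1-p2*g) < 0" using Q1 unfolding QQ1 by simp
  hence b: "p2*g > p1" using assms by (simp add: mult_less_0_iff)
  have "p2 > 0"
  proof (rule ccontr)
    assume "\<not> p2 > 0" hence "p2 = 0" using assms by simp
    thus False using b p1 by simp
  qed
  thus ?thesis using a b p1 by simp
qed



lemma root_ident:
  fixes p1 p2 g x :: real
  assumes "p1 < 1" "p2 < 1" "g > 1" "p1 > 0" "p2 > 0" "p1*g > p2" "p2*g > p1"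
    "0 < x" "x < 1" "QQ p1 p2 g x = 0" "1-p1*g+(g-1)*p1*x > 0"
  shows "x*((g-1)*((g+1)*p1*p2 + sqrt(p1*p2)*Delta p1 p2 g)) = g*((g+1)*p1*p2 - 2*p2 + sqrt(p1*p2)*Delta p1 p2 g)"
    and "(sqrt(p1*p2)*Delta p1 p2 g)^2 = p1*p2*(4*g*(1-p1-p2) + (g+1)^2*p1*p2)"
    and "sqrt(p1*p2)*Delta p1 p2 g \<ge> 0"
proof -
  define r where "r = 1-p1-p2"
  define K where "K = g*(2-2*p1-p2)+p2"
  define A where "A = (g-1)^2*p1*r"
  define B where "B = -((g-1)*p1*K)"
  define C where "C = (1-p1)*g*(p1*g-p2)"
  define I where "I = 4*g*(1-p1-p2) + (g+1)^2*p1*p2"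
  define w where "w = sqrt(p1*p2)*Delta p1 p2 g"
  have Qx: "A*x^2+B*x+C = 0" using assms(10) unfolding QQ_def A_def B_def C_def r_def K_def
    by (simp add: algebra_simps)
  have neg: "2*A*x+B < 0"
  proof (cases "r \<ge> 0")
    case True
    have "(g-1)*r*x \<le> (g-1)*r*1" using True assms by (intro mult_left_mono) auto
    moreover have "K - 2*(g-1)*r = 2*r + p2*(g+1)" unfolding K_def r_def by algebra
    moreover have "p2*(g+1) > 0" using assms by simp
    ultimately have "2*((g-1)*r*x) - K < 0" using True by linarith
    hence "((g-1)*p1)*(2*((g-1)*r*x) - K) < 0" using assms mult_pos_neg[of "(g-1)*p1"] by simp
    moreover have "2*A*x+B = ((g-1)*p1)*(2*((g-1)*r*x) - K)" unfolding A_def B_def power2_eq_square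
      by algebra
    ultimately show ?thesis by simp
  next
    case False
    define x0 where "x0 = (p1*g-1)/((g-1)*p1)"
    have gp: "(g-1)*p1 > 0" using assms by simp
    have P0: "1-p1*g+(g-1)*p1*x0 = 0" unfolding x0_def using gp assms by simp
    have "(g-1)*p1*x0 < (g-1)*p1*x" using P0 assms by linarith
    hence x0x: "x0 < x" using gp by (metis mult_less_cancel_left_pos)
    have e1: "(g-1)*p1*1 = p1*g - p1" by algebra
    have "(g-1)*p1*x0 < (g-1)*p1*1" using P0 assms e1 by linarith
    hence x01: "x0 < 1" using gp by (metis mult_less_cancel_left_pos)
    have "(g-1)*x0 < (g-1)*1" using x01 assms by (intro mult_strict_left_mono) auto
    hence "g-(g-1)*x0 > 0" by simp
    hence Qx0: "QQ p1 p2 g x0 > 0" unfolding QQ_x0[OF P0] using assms by simp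
    have "(x-x0)*(A*(x+x0)+B) < 0"
      using QQ_diff[of p1 p2 g x x0] Qx0 assms(10) unfolding A_def B_def K_def r_def by simp
    hence l: "A*(x+x0)+B < 0" using x0x by (simp add: mult_less_0_iff)
    have "A < 0" unfolding A_def using False assms by (simp add: mult_pos_neg)
    hence "A*x < A*x0" using x0x by simp
    thus ?thesis using l by (simp add: algebra_simps)
  qed
  have disc: "B^2 - 4*A*C = (g-1)^2*(p1*p2*I)"
    unfolding A_def B_def C_def I_def K_def r_def power2_eq_square by algebra
  have sq: "(2*A*x+B)^2 = (g-1)^2*(p1*p2*I)"
  proof -
    have "(2*A*x+B)^2 = 4*A*(A*x^2+B*x+C) + (B^2 - 4*A*C)" unfolding power2_eq_square by algebra
    thus ?thesis using Qx disc by simp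
  qed
  have "(g-1)^2*(p1*p2*I) \<ge> 0" using sq by (metis zero_le_power2)
  hence pI: "p1*p2*I \<ge> 0" using assms by (simp add: zero_le_mult_iff)
  moreover have "p1*p2 > 0" using assms by simp
  ultimately have I0: "I \<ge> 0" by (simp add: zero_le_mult_iff)
  have wdef: "w = sqrt(p1*p2*I)" unfolding w_def Delta_def I_def by (simp add: real_sqrt_mult)
  have w0: "w \<ge> 0" unfolding wdef using pI by simp
  thus "sqrt(p1*p2)*Delta p1 p2 g \<ge> 0" unfolding w_def .
  have w2: "w^2 = p1*p2*I" unfolding wdef using pI by simp
  thus "(sqrt(p1*p2)*Delta p1 p2 g)^2 = p1*p2*(4*g*(1-p1-p2) + (g+1)^2*p1*p2)"
    unfolding w_def I_def by simp
  have "(2*A*x+B)^2 = ((g-1)*w)^2" using sq w2 by (simp add: power_mult_distrib)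
  hence "2*A*x+B = (g-1)*w \<or> 2*A*x+B = -((g-1)*w)" by (simp add: power2_eq_iff)
  moreover have "(g-1)*w \<ge> 0" using w0 assms by simp
  ultimately have wB: "(g-1)*w = -(2*A*x+B)" using neg by auto
  have "x*((g-1)*(p1*K+w)) = -x*B + x*((g-1)*w)" unfolding B_def by algebra
  also have "\<dots> = -2*(A*x^2+B*x+C) + 2*C" unfolding wB power2_eq_square by algebra
  finally have xw: "x*((g-1)*(p1*K+w)) = 2*C" using Qx by simp
  have C0: "C > 0" unfolding C_def using assms by simp
  hence nz: "(g-1)*(p1*K+w) \<noteq> 0" using xw by auto
  define E where "E = (g+1)*p1*p2 + w"
  define N where "N = (g+1)*p1*p2 - 2*p2 + w"
  have id: "2*C*E = g*N*(p1*K+w) - g*(w^2 - p1*p2*I)"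
    unfolding C_def E_def N_def K_def I_def power2_eq_square by algebra
  hence "2*C*E = g*N*(p1*K+w)" using w2 by simp
  hence "(p1*K+w)*(x*((g-1)*E)) = (p1*K+w)*(g*N)" using xw by (simp add: algebra_simps)
  moreover have "p1*K+w \<noteq> 0" using nz by simp
  ultimately have "x*((g-1)*E) = g*N" by simp
  thus "x*((g-1)*((g+1)*p1*p2 + sqrt(p1*p2)*Delta p1 p2 g)) = g*((g+1)*p1*p2 - 2*p2 + sqrt(p1*p2)*Delta p1 p2 g)"
    unfolding E_def N_def w_def .
qed



lemma y_ident:
  fixes p1 p2 g x y w :: real
  assumes "(1-p1)*y*(g-(g-1)*x) = x*(1-p1*g+(g-1)*p1*x)"
    "x*((g-1)*((g+1)*p1*p2 + w)) = g*((g+1)*p1*p2 - 2*p2 + w)"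
    "w^2 = p1*p2*(4*g*(1-p1-p2)+(g+1)^2*p1*p2)" "p1<1" "p2>0" "g>1"
  shows "y*((g-1)*((g+1)*p1*p2 + w)) = 2*g*p1 - (g+1)*p1*p2 - w"
proof -
  define E where "E = (g+1)*p1*p2 + w"
  define N where "N = (g+1)*p1*p2 - 2*p2 + w"
  define M where "M = 2*g*p1 - (g+1)*p1*p2 - w"
  define I where "I = 4*g*(1-p1-p2)+(g+1)^2*p1*p2"
  have X: "x*((g-1)*E) = g*N" using assms(2) unfolding E_def N_def .
  have "(1-p1)*y*(g-(g-1)*x)*((g-1)*E*E) = x*(1-p1*g+(g-1)*p1*x)*((g-1)*E*E)"
    using assms(1) by simp
  moreover have "(1-p1)*y*(g-(g-1)*x)*((g-1)*E*E) = (1-p1)*y*(g-1)*E*(g*E - x*((g-1)*E))"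
    by algebra
  moreover have "x*(1-p1*g+(g-1)*p1*x)*((g-1)*E*E) = x*((g-1)*E)*(E - p1*g*E + p1*(x*((g-1)*E)))"
    by algebra
  ultimately have "(1-p1)*y*(g-1)*E*(g*E - g*N) = g*N*(E - p1*g*E + p1*(g*N))"
    unfolding X by simp
  moreover have "(1-p1)*y*(g-1)*E*(g*E - g*N) = (2*g*(1-p1)*p2)*(y*((g-1)*E))"
    unfolding E_def N_def by algebra
  moreover have "g*N*(E - p1*g*E + p1*(g*N)) = (2*g*(1-p1)*p2)*M + g*(w^2 - p1*p2*I)"
    unfolding E_def N_def M_def I_def power2_eq_square by algebra
  ultimately have "(2*g*(1-p1)*p2)*(y*((g-1)*E)) = (2*g*(1-p1)*p2)*M"
    using assms(3) unfolding I_def by simp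
  moreover have "2*g*(1-p1)*p2 \<noteq> 0" using assms by simp
  ultimately have "y*((g-1)*E) = M" by simp
  thus ?thesis unfolding E_def M_def .
qed

lemma interior_fixed:
  fixes p1 p2 g x y :: real
  assumes base: "0 \<le> p1" "p1 < 1" "0 \<le> p2" "p2 < 1" "\<not> (p1 = 0 \<and> p2 = 0)" "g > 1"
    and xy: "0 < x" "x < 1" "0 \<le> y" "y \<le> 1"
    and fx: "Fnet p1 p2 g (x,y) = (x,y)"
  shows "interior_cond p1 p2 g \<and> (x,y) = beta_star p1 p2 g"
proof -
  have E12: "x*(1+(g-1)*(p1*x+(1-p1)*y)) = g*(p1*x+(1-p1)*y)"
     "y*(g-(g-1)*((1-p2)*x+p2*y)) = (1-p2)*x+p2*y"
    using fixed_iff[of p1 p2 g x y] base xy fx by auto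
  have R: "(1-p1)*y*(g-(g-1)*x) = x*(1-p1*g+(g-1)*p1*x)" using E12(1) E1_iff by blast
  have "(g-1)*x < (g-1)*1" using xy base by (intro mult_strict_left_mono) auto
  hence D: "g-(g-1)*x > 0" by simp
  have k: "(1-p1)^2*(g-(g-1)*x)^2*(y*(g-(g-1)*((1-p2)*x+p2*y)) - ((1-p2)*x+p2*y)) = -(g-1)*x*(1-x)*QQ p1 p2 g x"
    using E2_key[OF R] base D by simp
  have "-(g-1)*x*(1-x)*QQ p1 p2 g x = 0"
    unfolding k[symmetric] using E12(2) by simp
  hence Q: "QQ p1 p2 g x = 0" using base xy by simp
  have "(1-p1)*y*(g-(g-1)*x) \<ge> 0" using base xy D by simp
  hence "x*(1-p1*g+(g-1)*p1*x) \<ge> 0" using R by simp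
  hence P0: "1-p1*g+(g-1)*p1*x \<ge> 0" using xy by (simp add: zero_le_mult_iff)
  have P: "1-p1*g+(g-1)*p1*x > 0"
  proof (rule ccontr)
    assume "\<not> ?thesis"
    hence "1-p1*g+(g-1)*p1*x = 0" using P0 by simp
    hence "(1-p1)*y*(g-(g-1)*x) = 0" using R by simp
    hence "y = 0" using base D by simp
    hence "(1-p2)*x = 0" using E12(2) by simp
    thus False using base xy by simp
  qed
  have c: "p1 > 0 \<and> p2 > 0 \<and> p1*g > p2 \<and> p2*g > p1"
    using root_cond[OF base xy(1,2) Q P] .
  have ri: "x*((g-1)*((g+1)*p1*p2 + sqrt(p1*p2)*Delta p1 p2 g)) = g*((g+1)*p1*p2 - 2*p2 + sqrt(p1*p2)*Delta p1 p2 g)"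
    "(sqrt(p1*p2)*Delta p1 p2 g)^2 = p1*p2*(4*g*(1-p1-p2) + (g+1)^2*p1*p2)"
    "sqrt(p1*p2)*Delta p1 p2 g \<ge> 0"
    using root_ident[of p1 p2 g x] base c xy Q P by auto
  have yi: "y*((g-1)*((g+1)*p1*p2 + sqrt(p1*p2)*Delta p1 p2 g)) = 2*g*p1 - (g+1)*p1*p2 - sqrt(p1*p2)*Delta p1 p2 g"
    using y_ident[OF R ri(1) ri(2)] base c by auto
  have "(g+1)*p1*p2 > 0" using c base by simp
  hence Epos: "(g-1)*((g+1)*p1*p2 + sqrt(p1*p2)*Delta p1 p2 g) > 0" using ri(3) base by simp
  have "(x,y) = beta_star p1 p2 g"
  proof -
    have En: "(g+1)*p1*p2 + sqrt(p1*p2)*Delta p1 p2 g \<noteq> 0" "g \<noteq> 1" using Epos by auto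
    show ?thesis
      unfolding beta_star_def Let_def using ri(1) yi Epos En
      by (simp add: eq_divide_eq)
  qed
  moreover have "interior_cond p1 p2 g"
    unfolding interior_cond_def using c by (simp add: divide_less_eq mult.commute)
  ultimately show ?thesis by simp
qed



lemma exists_interior:
  fixes p1 p2 g :: real
  assumes base: "0 \<le> p1" "p1 < 1" "0 \<le> p2" "p2 < 1" "\<not> (p1 = 0 \<and> p2 = 0)" "g > 1"
    and ic: "interior_cond p1 p2 g"
  shows "\<exists>x y. 0 < x \<and> x < 1 \<and> 0 \<le> y \<and> y \<le> 1 \<and> Fnet p1 p2 g (x,y) = (x,y)"
proof -
  have p1: "p1 > 0" and p2: "p2 > 0" using ic base unfolding interior_cond_def by auto
  have "p1/p2 < g" "p2/p1 < g" using ic unfolding interior_cond_def by auto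
  hence c1: "p1 < g*p2" and c2: "p2 < g*p1" using p1 p2 by (auto simp: divide_less_eq mult.commute)
  define x0 where "x0 = (p1*g-1)/((g-1)*p1)"
  have gp: "(g-1)*p1 > 0" using base p1 by simp
  have P0: "1-p1*g+(g-1)*p1*x0 = 0" unfolding x0_def using gp base p1 by simp
  have e1: "(g-1)*p1*1 = p1*g - p1" by algebra
  have "(g-1)*p1*x0 < (g-1)*p1*1" using P0 base e1 by linarith
  hence x01: "x0 < 1" using gp by (metis mult_less_cancel_left_pos)
  have "(g-1)*x0 < (g-1)*1" using x01 base by (intro mult_strict_left_mono) auto
  hence "g-(g-1)*x0 > 0" by simp
  hence Qx0: "QQ p1 p2 g x0 > 0" unfolding QQ_x0[OF P0] using base by simp
  have Q0: "QQ p1 p2 g 0 > 0" unfolding QQ0 using base c2 by (simp add: mult.commute)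
  have Q1: "QQ p1 p2 g 1 < 0" unfolding QQ1 using base c1
    by (simp add: mult.commute mult_pos_neg)
  define lo where "lo = max 0 x0"
  have Qlo: "QQ p1 p2 g lo > 0" unfolding lo_def using Q0 Qx0 by (simp add: max_def)
  have lo1: "lo \<le> 1" unfolding lo_def using x01 by simp
  have cont: "\<forall>x. lo \<le> x \<and> x \<le> 1 \<longrightarrow> isCont (QQ p1 p2 g) x"
    unfolding QQ_def by (intro allI impI continuous_intros)
  obtain x where x: "lo \<le> x" "x \<le> 1" "QQ p1 p2 g x = 0"
    using IVT2[of "QQ p1 p2 g" 1 0 lo, OF _ _ lo1 cont] Q1 Qlo by auto
  have x1: "x < 1" using x Q1 by (cases "x = 1") auto
  have xlo: "lo < x" using x Qlo by (cases "x = lo") auto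
  hence xpos: "0 < x" and xx0: "x0 < x" unfolding lo_def by auto
  have "1-p1*g+(g-1)*p1*x = (g-1)*p1*(x-x0)" using P0 by (simp add: algebra_simps)
  hence P: "1-p1*g+(g-1)*p1*x > 0" using gp xx0 by simp
  have "(g-1)*x < (g-1)*1" using x1 base by (intro mult_strict_left_mono) auto
  hence D: "g-(g-1)*x > 0" by simp
  define y where "y = x*(1-p1*g+(g-1)*p1*x)/((1-p1)*(g-(g-1)*x))"
  have qD: "(1-p1)*(g-(g-1)*x) > 0" using base D by simp
  have yD: "(1-p1)*y*(g-(g-1)*x) = x*(1-p1*g+(g-1)*p1*x)"
    unfolding y_def using qD by (simp add: field_simps)
  have y0: "y \<ge> 0" unfolding y_def using qD P xpos by simp
  have "(1-p1)*(g-(g-1)*x)*(1-y) = (1-x)*((1-p1)*g+(g-1)*p1*x)"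
    using yD by (simp add: algebra_simps)
  moreover have "(1-x)*((1-p1)*g+(g-1)*p1*x) \<ge> 0" using x1 xpos base p1 by simp
  ultimately have "(1-p1)*(g-(g-1)*x)*(1-y) \<ge> 0" by simp
  hence y1: "y \<le> 1" using qD by (simp add: zero_le_mult_iff)
  have E1: "x*(1+(g-1)*(p1*x+(1-p1)*y)) = g*(p1*x+(1-p1)*y)" using yD E1_iff by blast
  have k: "(1-p1)^2*(g-(g-1)*x)^2*(y*(g-(g-1)*((1-p2)*x+p2*y)) - ((1-p2)*x+p2*y)) = -(g-1)*x*(1-x)*QQ p1 p2 g x"
    using E2_key[OF yD] base D by simp
  hence "(1-p1)^2*(g-(g-1)*x)^2*(y*(g-(g-1)*((1-p2)*x+p2*y)) - ((1-p2)*x+p2*y)) = 0"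
    using x by simp
  moreover have "(1-p1)^2*(g-(g-1)*x)^2 \<noteq> 0" using base D by simp
  ultimately have E2: "y*(g-(g-1)*((1-p2)*x+p2*y)) = (1-p2)*x+p2*y" by simp
  have "Fnet p1 p2 g (x,y) = (x,y)"
    using fixed_iff[of p1 p2 g x y] base xpos x1 y0 y1 E1 E2 by simp
  thus ?thesis using xpos x1 y0 y1 by blast
qed

theorem proposition4:
  fixes p1 p2 \<gamma> :: real
  assumes "0 \<le> p1" "p1 < 1" "0 \<le> p2" "p2 < 1" "\<not> (p1 = 0 \<and> p2 = 0)" "\<gamma> > 1"
  shows "{\<beta> \<in> {0..1} \<times> {0..1}. Fnet p1 p2 \<gamma> \<beta> = \<beta>} =
           {(0, 0), (1, 1)} \<union> (if interior_cond p1 p2 \<gamma> then {beta_star p1 p2 \<gamma>} else {})"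
proof (rule set_eqI)
  fix b :: "real \<times> real"
  obtain x y where b: "b = (x,y)" by (cases b)
  have f00: "Fnet p1 p2 \<gamma> (0,0) = (0,0)"
    using fixed_iff[of p1 p2 \<gamma> 0 0] assms by simp
  have f11: "Fnet p1 p2 \<gamma> (1,1) = (1,1)"
    using fixed_iff[of p1 p2 \<gamma> 1 1] assms by simp
  show "b \<in> {\<beta> \<in> {0..1} \<times> {0..1}. Fnet p1 p2 \<gamma> \<beta> = \<beta>} \<longleftrightarrow>
        b \<in> {(0, 0), (1, 1)} \<union> (if interior_cond p1 p2 \<gamma> then {beta_star p1 p2 \<gamma>} else {})"
  proof
    assume "b \<in> {\<beta> \<in> {0..1} \<times> {0..1}. Fnet p1 p2 \<gamma> \<beta> = \<beta>}"
    hence xy: "0 \<le> x" "x \<le> 1" "0 \<le> y" "y \<le> 1" and fx: "Fnet p1 p2 \<gamma> (x,y) = (x,y)"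
      unfolding b by auto
    have E1: "x*(1+(\<gamma>-1)*(p1*x+(1-p1)*y)) = \<gamma>*(p1*x+(1-p1)*y)"
      using fixed_iff[of p1 p2 \<gamma> x y] assms xy fx by auto
    hence R: "(1-p1)*y*(\<gamma>-(\<gamma>-1)*x) = x*(1-p1*\<gamma>+(\<gamma>-1)*p1*x)" using E1_iff by blast
    show "b \<in> {(0, 0), (1, 1)} \<union> (if interior_cond p1 p2 \<gamma> then {beta_star p1 p2 \<gamma>} else {})"
    proof (cases "x = 0")
      case True
      hence "(1-p1)*y*\<gamma> = 0" using R by simp
      hence "y = 0" using assms by simp
      thus ?thesis using True b by simp
    next
      case False
      show ?thesis
      proof (cases "x = 1")
        case True
        hence "(1-p1)*y = (1-p1)*1" using R by (simp add: algebra_simps)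
        hence "y = 1" using assms by simp
        thus ?thesis using True b by simp
      next
        case False2: False
        have "interior_cond p1 p2 \<gamma> \<and> (x,y) = beta_star p1 p2 \<gamma>"
          using interior_fixed[OF assms, of x y] xy False False2 fx by simp
        thus ?thesis using b by simp
      qed
    qed
  next
    assume h: "b \<in> {(0, 0), (1, 1)} \<union> (if interior_cond p1 p2 \<gamma> then {beta_star p1 p2 \<gamma>} else {})"
    show "b \<in> {\<beta> \<in> {0..1} \<times> {0..1}. Fnet p1 p2 \<gamma> \<beta> = \<beta>}"
    proof (cases "b \<in> {(0,0),(1,1)}")
      case True
      thus ?thesis using f00 f11 by auto
    next
      case False
      hence ic: "interior_cond p1 p2 \<gamma>" and bs: "b = beta_star p1 p2 \<gamma>" using h
        by (auto split: if_splits)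
      obtain u v where uv: "0 < u" "u < 1" "0 \<le> v" "v \<le> 1" "Fnet p1 p2 \<gamma> (u,v) = (u,v)"
        using exists_interior[OF assms ic] by blast
      have "(u,v) = beta_star p1 p2 \<gamma>" using interior_fixed[OF assms uv(1-4) uv(5)] by simp
      hence "b = (u,v)" using bs by simp
      thus ?thesis using uv by auto
    qed
  qed
qed

end
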